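(* Let $\rho\in\mathcal{X}_2$, i.e. $\rho$ is an $\mathrm{SL}(2,\mathbb{C})$ character of the one-holed torus with $\mathrm{tr}\,\rho(XYX^{-1}Y^{-1})=2$. Then either $\mathcal{E}(\rho)=\{X_0\}$ for a single element $X_0\in\mathscr{PL}$, or $\mathcal{E}(\rho)=\mathscr{PL}$. Furthermore, in the first case, if $X_0\in\mathscr{C}$ then $\mathrm{tr}\,\rho(X_0)\in[-2,2]$ and $\mathrm{tr}\,\rho(X)\notin[-2,2]$ for all $X\in\mathscr{C}\setminus\{X_0\}$, while if $X_0\notin\mathscr{C}$ then $\mathrm{tr}\,\rho(X)\notin[-2,2]$ for all $X\in\mathscr{C}$; and in the second case $\mathrm{tr}\,\rho(X)\in[-2,2]$ for all $X\in\mathscr{C}$.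
   Context: $T$ is the one-holed torus; $\pi=\pi_1(T)$ is free on generators $X,Y$. The character variety is $\mathcal{X}=\mathrm{Hom}(\pi,\mathrm{SL}(2,\mathbb{C}))/\!/\mathrm{SL}(2,\mathbb{C})$, identified with $\mathbb{C}^3$ via $\rho\mapsto(\mathrm{tr}\,\rho(X),\mathrm{tr}\,\rho(Y),\mathrm{tr}\,\rho(XY))$. For $\kappa\in\mathbb{C}$, $\mathcal{X}_\kappa=\{\rho:\mathrm{tr}\,\rho(XYX^{-1}Y^{-1})=\kappa\}$ (independent of the choice of free generators); it is the set of $(x,y,z)$ with $x^2+y^2+z^2-xyz-2=\kappa$. $\mathscr{C}$ is the set of free homotopy classes of essential (non-trivial, non-boundary-parallel) simple closed curves on $T$; $\mathrm{tr}\,\rho(W)$ is well defined for $W\in\mathscr{C}$. $\mathscr{PL}$ is the projective lamination space of $T$, identified with $\hat{\mathbb{R}}$ so that $\mathscr{C}$ corresponds to $\hat{\mathbb{Q}}$, with the topology of $\hat{\mathbb R}$. $\Lambda\in\mathscr{PL}$ is an end invariant of $\rho$ if there exist $K>0$ and distinct $X_n\in\mathscr{C}$ with $X_n\to\Lambda$ and $|\mathrm{tr}\,\rho(X_n)|<K$ for all $n$; $\mathcal{E}(\rho)$ is the set of end invariants. *)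

theory Defs
  imports "HOL-Analysis.Analysis"
begin

text \<open>SL(2,C) elements are represented as 2x2 complex matrices of determinant 1.\<close>
type_synonym cmat = "complex^2^2"

definition mpow_nat :: "cmat \<Rightarrow> nat \<Rightarrow> cmat" where
  "mpow_nat M k = ((\<lambda>N. N ** M) ^^ k) (mat 1)"

definition mpow_int :: "cmat \<Rightarrow> int \<Rightarrow> cmat" where
  "mpow_int M n = (if 0 \<le> n then mpow_nat M (nat n) else mpow_nat (matrix_inv M) (nat (- n)))"

text \<open>Image under rho = (A = rho X, B = rho Y) of the standard (Christoffel-type) primitive word
  of homology class p X + q Y, for coprime p and q > 0:
  X^(a_1) Y X^(a_2) Y ... X^(a_q) Y with a_k = floor(k p / q) - floor((k-1) p / q).\<close>
definition word_mat :: "cmat \<Rightarrow> cmat \<Rightarrow> int \<Rightarrow> nat \<Rightarrow> cmat" where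
  "word_mat A B p q =
     foldl (\<lambda>M k. M ** mpow_int A (\<lfloor>of_int (int k * p) / (of_int (int q) :: real)\<rfloor>
                                    - \<lfloor>of_int ((int k - 1) * p) / (of_int (int q) :: real)\<rfloor>) ** B)
           (mat 1) [1..<q+1]"

text \<open>Essential simple closed curves on the one-holed torus are indexed by extended rationals
  (slopes): None is the slope 1/0 (the curve X), Some (p/q) (reduced, q > 0) is the curve
  of homology class p X + q Y.\<close>
definition tr_curve :: "cmat \<Rightarrow> cmat \<Rightarrow> rat option \<Rightarrow> complex" where
  "tr_curve A B c = (case c of
      None \<Rightarrow> trace A
    | Some r \<Rightarrow> (case quotient_of r of (p, q) \<Rightarrow> trace (word_mat A B p (nat q))))"

text \<open>The projective lamination space PL is identified with the extended real line
  (None = infinity); curves correspond to the extended rationals.\<close>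
definition curve_pt :: "rat option \<Rightarrow> real option" where
  "curve_pt c = map_option real_of_rat c"

text \<open>Convergence in the topology of the extended real line (one-point compactification).\<close>
definition hat_tendsto :: "(nat \<Rightarrow> real option) \<Rightarrow> real option \<Rightarrow> bool" where
  "hat_tendsto f L = (case L of
      Some l \<Rightarrow> (\<forall>e>0. \<exists>N. \<forall>n\<ge>N. \<exists>x. f n = Some x \<and> \<bar>x - l\<bar> < e)
    | None \<Rightarrow> (\<forall>M. \<exists>N. \<forall>n\<ge>N. f n = None \<or> (\<exists>x. f n = Some x \<and> \<bar>x\<bar> > M)))"

definition end_invariants :: "cmat \<Rightarrow> cmat \<Rightarrow> real option set" where
  "end_invariants A B = {\<Lambda>. \<exists>K>0. \<exists>Xs :: nat \<Rightarrow> rat option.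
      inj Xs \<and> hat_tendsto (\<lambda>n. curve_pt (Xs n)) \<Lambda> \<and> (\<forall>n. cmod (tr_curve A B (Xs n)) < K)}"

definition in_real_interval :: "complex \<Rightarrow> bool" where
  "in_real_interval t \<longleftrightarrow> t \<in> complex_of_real ` {-2..2}"

end

theory Submission
  imports Defs
begin

lemmas m2simps = matrix_vector_mult_def matrix_matrix_mult_def sum_2 vec_eq_iff forall_2 det_2 trace_def mat_def

definition adj2 :: "cmat \<Rightarrow> cmat" where
  "adj2 M = vector [vector [M$2$2, - M$1$2], vector [- M$2$1, M$1$1]]"

lemma adj2_right: "det M = 1 \<Longrightarrow> M ** adj2 M = mat 1"
  by (simp add: m2simps adj2_def vector_2 algebra_simps)

lemma adj2_left: "det M = 1 \<Longrightarrow> adj2 M ** M = mat 1"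
  by (simp add: m2simps adj2_def vector_2 algebra_simps)

lemma matrix_inv_2: assumes "det M = 1" shows "matrix_inv M = adj2 M"
proof -
  have ex: "\<exists>X. M ** X = mat 1 \<and> X ** M = mat 1" using adj2_right[OF assms] adj2_left[OF assms] by blast
  let ?X = "matrix_inv M"
  have X: "M ** ?X = mat 1 \<and> ?X ** M = mat 1" unfolding matrix_inv_def by (rule someI_ex[OF ex])
  have "?X = ?X ** (M ** adj2 M)" using adj2_right[OF assms] by (simp add: matrix_mul_rid)
  also have "\<dots> = (?X ** M) ** adj2 M" by (simp add: matrix_mul_assoc)
  also have "\<dots> = adj2 M" using X by (simp add: matrix_mul_lid)
  finally show ?thesis .
qed

lemma smult_rcancel:
  assumes "(v::complex^2) \<noteq> 0" "a *s v = b *s v" shows "a = b"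
proof -
  obtain i where i: "v$i \<noteq> 0" using assms(1) by (metis vec_eq_iff zero_index)
  from assms(2) have "(a *s v)$i = (b *s v)$i" by (rule arg_cong)
  hence "a * v$i = b * v$i" by (simp only: vector_smult_component)
  thus ?thesis using i by auto
qed

lemma CH2: "(M::cmat) *v (M *v v) = trace M *s (M *v v) - det M *s v"
  by (simp add: m2simps algebra_simps)

lemma eig_trace:
  assumes "det (M::cmat) = 1" "M *v v = \<mu> *s v" "v \<noteq> 0"
  shows "\<mu> \<noteq> 0 \<and> trace M = \<mu> + 1/\<mu>"
proof -
  have l: "M *v (\<mu> *s v) = \<mu> *s (M *v v)" by (simp add: matrix_vector_mult_def vec_eq_iff sum_distrib_left algebra_simps)
  have "(\<mu>*\<mu>) *s v = (trace M * \<mu> - 1) *s v"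
  proof -
    have "(\<mu>*\<mu>) *s v = M *v (M *v v)" using assms(2) l by (simp add: vector_smult_assoc)
    also have "\<dots> = trace M *s (\<mu> *s v) - 1 *s v" using CH2[of M v] assms by simp
    also have "\<dots> = (trace M * \<mu> - 1) *s v" by (simp add: vec_eq_iff algebra_simps)
    finally show ?thesis .
  qed
  hence e: "\<mu>*\<mu> = trace M * \<mu> - 1"
    using assms(3) by (rule smult_rcancel[rotated])
  hence "\<mu> \<noteq> 0" by auto
  with e show ?thesis by (simp add: field_simps)
qed

lemma comm_id: "trace ((A::cmat) ** B ** adj2 A ** adj2 B) + det (A ** B - B ** A) = 2 * det A * det B"
  apply (simp add: m2simps adj2_def vector_2)
  by algebra

lemma anti_comm: "(A::cmat) *v ((A ** B - B ** A) *v x) + (A ** B - B ** A) *v (A *v x) = trace A *s ((A ** B - B ** A) *v x)"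
  by (simp add: m2simps algebra_simps)

lemma ker2: assumes "det (M::cmat) = 0" "M \<noteq> 0" shows "\<exists>u. u \<noteq> 0 \<and> M *v u = 0"
proof (cases "M$1$1 = 0 \<and> M$1$2 = 0")
  case True
  have "M$2$1 \<noteq> 0 \<or> M$2$2 \<noteq> 0" using True assms(2) by (auto simp: vec_eq_iff forall_2)
  hence "vector [M$2$2, - M$2$1] \<noteq> (0::complex^2)" by (auto simp: vec_eq_iff forall_2 vector_2)
  moreover have "M *v vector [M$2$2, - M$2$1] = 0" using assms(1) True by (simp add: m2simps vector_2 algebra_simps)
  ultimately show ?thesis by blast
next
  case False
  hence "vector [M$1$2, - M$1$1] \<noteq> (0::complex^2)" by (auto simp: vec_eq_iff forall_2 vector_2)
  moreover have "M *v vector [M$1$2, - M$1$1] = 0" using assms(1) by (simp add: m2simps vector_2 algebra_simps)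
  ultimately show ?thesis by blast
qed

lemma line2: assumes "(M::cmat) \<noteq> 0" "M *v u = 0" "M *v w = 0" "u \<noteq> 0" shows "\<exists>c. w = c *s u"
proof -
  have e1: "M$1$1 * u$1 + M$1$2 * u$2 = 0" "M$2$1 * u$1 + M$2$2 * u$2 = 0"
    using assms(2) by (simp_all add: m2simps)
  have e2: "M$1$1 * w$1 + M$1$2 * w$2 = 0" "M$2$1 * w$1 + M$2$2 * w$2 = 0"
    using assms(3) by (simp_all add: m2simps)
  have d: "u$1 * w$2 - u$2 * w$1 = 0"
  proof (rule ccontr)
    assume nz: "u$1 * w$2 - u$2 * w$1 \<noteq> 0"
    have "M$i$j = 0" for i j
    proof -
      have "M$i$1 * u$1 + M$i$2 * u$2 = 0" "M$i$1 * w$1 + M$i$2 * w$2 = 0"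
        using e1 e2 exhaust_2[of i] by auto
      hence "M$i$1 * (u$1 * w$2 - u$2 * w$1) = 0" "M$i$2 * (u$1 * w$2 - u$2 * w$1) = 0"
      proof -
        assume p: "M$i$1 * u$1 + M$i$2 * u$2 = 0" and q: "M$i$1 * w$1 + M$i$2 * w$2 = 0"
        have "M$i$1 * (u$1 * w$2 - u$2 * w$1) = w$2 * (M$i$1 * u$1 + M$i$2 * u$2) - u$2 * (M$i$1 * w$1 + M$i$2 * w$2)"
          by (simp add: algebra_simps)
        thus "M$i$1 * (u$1 * w$2 - u$2 * w$1) = 0" using p q by simp
        have "M$i$2 * (u$1 * w$2 - u$2 * w$1) = u$1 * (M$i$1 * w$1 + M$i$2 * w$2) - w$1 * (M$i$1 * u$1 + M$i$2 * u$2)"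
          by (simp add: algebra_simps)
        thus "M$i$2 * (u$1 * w$2 - u$2 * w$1) = 0" using p q by simp
      qed
      thus ?thesis using nz exhaust_2[of j] by auto
    qed
    hence "M = 0" by (simp add: vec_eq_iff)
    thus False using assms(1) by simp
  qed
  show ?thesis
  proof (cases "u$1 = 0")
    case True
    hence "u$2 \<noteq> 0" using assms(4) by (auto simp: vec_eq_iff forall_2)
    hence "w$1 = 0" using d True by simp
    hence "w = (w$2 / u$2) *s u" using True \<open>u$2 \<noteq> 0\<close> by (simp add: vec_eq_iff forall_2)
    thus ?thesis by blast
  next
    case False
    have "u$1 * w$2 = u$2 * w$1" using d by simp
    hence "w$2 = (w$1 / u$1) * u$2" using False by (simp add: field_simps)
    hence "w = (w$1 / u$1) *s u" using False by (simp add: vec_eq_iff forall_2)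
    thus ?thesis by blast
  qed
qed

lemma eigval2: "\<exists>l. det ((M::cmat) - mat l) = 0"
proof -
  define t where "t = trace M"
  define d where "d = det M"
  define l where "l = t/2 + csqrt (t^2 - 4*d) / 2"
  have "l^2 - t*l + d = 0"
  proof -
    have "2*l - t = csqrt (t^2 - 4*d)" unfolding l_def by (simp add: algebra_simps)
    hence "(2*l - t)^2 = t^2 - 4*d" by simp
    hence "4*(l^2 - t*l + d) = 0" by (simp add: power2_eq_square algebra_simps)
    thus ?thesis by (simp only: mult_eq_0_iff) simp
  qed
  moreover have "det (M - mat l) = l^2 - t*l + d" unfolding t_def d_def
    by (simp add: m2simps power2_eq_square algebra_simps)
  ultimately show ?thesis by auto
qed

lemma anti_comm2: "(B::cmat) *v ((A ** B - B ** A) *v x) + (A ** B - B ** A) *v (B *v x) = trace B *s ((A ** B - B ** A) *v x)"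
  by (simp add: m2simps algebra_simps)

lemma mvm_sub_mat: "((A::cmat) - mat l) *v y = A *v y - l *s y"
  by (simp add: m2simps algebra_simps)

lemma mvm_smult: "(A::cmat) *v (c *s y) = c *s (A *v y)"
  by (simp add: matrix_vector_mult_def vec_eq_iff sum_distrib_left algebra_simps)

lemma mvm_zero: "(A::cmat) *v 0 = 0"
  by (simp add: m2simps)

lemma common_eig:
  assumes "det (A::cmat) = 1" "det B = 1" "trace (A ** B ** matrix_inv A ** matrix_inv B) = 2"
  shows "\<exists>v a b. v \<noteq> 0 \<and> A *v v = a *s v \<and> B *v v = b *s v"
proof -
  define N where "N = A ** B - B ** A"
  have "trace (A ** B ** adj2 A ** adj2 B) = 2" using assms by (simp add: matrix_inv_2)
  hence dN: "det N = 0" using comm_id[of A B] assms unfolding N_def by simp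
  show ?thesis
  proof (cases "N = 0")
    case False
    obtain u where u: "u \<noteq> 0" "N *v u = 0" using ker2[OF dN False] by blast
    have "N *v (A *v u) = 0" using anti_comm[of A B u] u(2) unfolding N_def[symmetric] by (simp add: mvm_zero)
    then obtain a where a: "A *v u = a *s u" using line2[OF False u(2) _ u(1)] by blast
    have "N *v (B *v u) = 0" using anti_comm2[of B A u] u(2) unfolding N_def[symmetric] by (simp add: mvm_zero)
    then obtain b where b: "B *v u = b *s u" using line2[OF False u(2) _ u(1)] by blast
    show ?thesis using u(1) a b by blast
  next
    case True
    hence AB: "A ** B = B ** A" unfolding N_def by simp
    obtain l where l: "det (A - mat l) = 0" using eigval2 by blast
    show ?thesis
    proof (cases "A - mat l = 0")
      case True
      hence Al: "A *v y = l *s y" for y using mvm_sub_mat[of A l y] by simp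
      obtain m where m: "det (B - mat m) = 0" using eigval2 by blast
      show ?thesis
      proof (cases "B - mat m = 0")
        case True
        hence "B *v y = m *s y" for y using mvm_sub_mat[of B m y] by simp
        moreover have "axis 1 (1::complex) \<noteq> (0::complex^2)" by (simp add: axis_eq_0_iff)
        ultimately show ?thesis using Al by blast
      next
        case False
        obtain u where u: "u \<noteq> 0" "(B - mat m) *v u = 0" using ker2[OF m False] by blast
        hence "B *v u = m *s u" using mvm_sub_mat[of B m u] by simp
        thus ?thesis using u(1) Al by blast
      qed
    next
      case False
      obtain u where u: "u \<noteq> 0" "(A - mat l) *v u = 0" using ker2[OF l False] by blast
      hence Au: "A *v u = l *s u" using mvm_sub_mat[of A l u] by simp
      have "(A - mat l) *v (B *v u) = A *v (B *v u) - l *s (B *v u)"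
        by (rule mvm_sub_mat)
      also have "A *v (B *v u) = B *v (A *v u)"
        by (metis AB matrix_vector_mul_assoc)
      also have "B *v (A *v u) - l *s (B *v u) = 0" by (simp add: Au mvm_smult)
      finally obtain b where "B *v u = b *s u" using line2[OF False u(2) _ u(1)] by blast
      thus ?thesis using u(1) Au by blast
    qed
  qed
qed

lemma det_adj2: "det (adj2 M) = det M"
  by (simp add: det_2 adj2_def vector_2)

lemma mpow_nat_Suc: "mpow_nat M (Suc k) = mpow_nat M k ** M"
  by (simp add: mpow_nat_def)

lemma mpow_nat_eig:
  assumes "(M::cmat) *v v = m *s v" "det M = 1"
  shows "mpow_nat M k *v v = (m^k) *s v \<and> det (mpow_nat M k) = 1"
proof (induction k)
  case 0
  then show ?case by (simp add: mpow_nat_def det_I)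
next
  case (Suc k)
  have "mpow_nat M (Suc k) *v v = mpow_nat M k *v (M *v v)"
    by (simp add: mpow_nat_Suc matrix_vector_mul_assoc)
  also have "\<dots> = m *s (mpow_nat M k *v v)" by (simp add: assms(1) mvm_smult)
  also have "\<dots> = (m^Suc k) *s v" using Suc.IH by (simp add: vector_smult_assoc algebra_simps)
  finally show ?case using Suc.IH assms(2) by (simp add: mpow_nat_Suc det_mul)
qed

lemma inv_eig:
  assumes "det (A::cmat) = 1" "A *v v = a *s v" "a \<noteq> 0"
  shows "matrix_inv A *v v = (1/a) *s v" "det (matrix_inv A) = 1"
proof -
  have "v = adj2 A *v (A *v v)" using adj2_left[OF assms(1)]
    by (simp add: matrix_vector_mul_assoc)
  also have "\<dots> = a *s (adj2 A *v v)" by (simp add: assms(2) mvm_smult)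
  finally have "(1/a) *s v = (1/a) *s (a *s (adj2 A *v v))" by simp
  hence "(1/a) *s v = ((1/a) * a) *s (adj2 A *v v)" by (simp only: vector_smult_assoc)
  hence "(1/a) *s v = adj2 A *v v" using assms(3) by simp
  thus "matrix_inv A *v v = (1/a) *s v" using matrix_inv_2[OF assms(1)] by simp
  show "det (matrix_inv A) = 1" using matrix_inv_2[OF assms(1)] det_adj2 assms(1) by simp
qed

lemma mpow_int_eig:
  assumes "det (A::cmat) = 1" "A *v v = a *s v" "a \<noteq> 0"
  shows "mpow_int A k *v v = (a powi k) *s v \<and> det (mpow_int A k) = 1"
proof (cases "0 \<le> k")
  case True
  thus ?thesis using mpow_nat_eig[OF assms(2,1), of "nat k"] by (simp add: mpow_int_def power_int_def)
next
  case False
  thus ?thesis using mpow_nat_eig[OF inv_eig[OF assms], of "nat (-k)"]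
    by (simp add: mpow_int_def power_int_def inverse_eq_divide)
qed

lemma word_eig:
  assumes "det (A::cmat) = 1" "A *v v = a *s v" "a \<noteq> 0" "det B = 1" "B *v v = b *s v"
  shows "foldl (\<lambda>M k. M ** mpow_int A (\<lfloor>of_int (int k * p) / (of_int (int q) :: real)\<rfloor>
                                    - \<lfloor>of_int ((int k - 1) * p) / (of_int (int q) :: real)\<rfloor>) ** B)
           (mat 1) [1..<n+1] *v v = (a powi \<lfloor>of_int (int n * p) / (of_int (int q) :: real)\<rfloor> * b^n) *s v
       \<and> det (foldl (\<lambda>M k. M ** mpow_int A (\<lfloor>of_int (int k * p) / (of_int (int q) :: real)\<rfloor>
                                    - \<lfloor>of_int ((int k - 1) * p) / (of_int (int q) :: real)\<rfloor>) ** B)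
           (mat 1) [1..<n+1]) = 1"
proof (induction n)
  case 0
  then show ?case by (simp add: det_I)
next
  case (Suc n)
  define fl where "fl k = \<lfloor>of_int (int k * p) / (of_int (int q) :: real)\<rfloor>" for k :: nat
  define F where "F n = foldl (\<lambda>M k. M ** mpow_int A (\<lfloor>of_int (int k * p) / (of_int (int q) :: real)\<rfloor>
                                    - \<lfloor>of_int ((int k - 1) * p) / (of_int (int q) :: real)\<rfloor>) ** B)
           (mat 1) [1..<n+1]" for n
  have g: "\<lfloor>of_int ((int (Suc n) - 1) * p) / (of_int (int q) :: real)\<rfloor> = fl n"
    unfolding fl_def by simp
  have FS: "F (Suc n) = F n ** mpow_int A (fl (Suc n) - fl n) ** B"
    unfolding F_def fl_def by (simp add: g[unfolded fl_def])
  have IH: "F n *v v = (a powi fl n * b^n) *s v" "det (F n) = 1"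
    using Suc.IH unfolding F_def fl_def by auto
  have M: "mpow_int A (fl (Suc n) - fl n) *v v = (a powi (fl (Suc n) - fl n)) *s v"
          "det (mpow_int A (fl (Suc n) - fl n)) = 1"
    using mpow_int_eig[OF assms(1-3)] by auto
  have "F (Suc n) *v v = F n *v (mpow_int A (fl (Suc n) - fl n) *v (B *v v))"
    by (simp add: FS matrix_mul_assoc matrix_vector_mul_assoc)
  also have "\<dots> = (b * a powi (fl (Suc n) - fl n)) *s (F n *v v)"
    by (simp add: assms(5) mvm_smult M vector_smult_assoc)
  also have "\<dots> = (b * (a powi (fl (Suc n) - fl n) * a powi fl n) * b^n) *s v"
    by (simp add: IH vector_smult_assoc algebra_simps)
  also have "a powi (fl (Suc n) - fl n) * a powi fl n = a powi fl (Suc n)"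
    using power_int_add[of a "fl (Suc n) - fl n" "fl n"] assms(3) by simp
  finally have "F (Suc n) *v v = (a powi fl (Suc n) * b ^ Suc n) *s v" by (simp add: algebra_simps)
  moreover have "det (F (Suc n)) = 1" using IH M assms(4) by (simp add: FS det_mul)
  ultimately show ?case unfolding F_def fl_def by simp
qed

definition mu :: "complex \<Rightarrow> complex \<Rightarrow> rat option \<Rightarrow> complex" where
  "mu a b c = (case c of None \<Rightarrow> a | Some r \<Rightarrow> (case quotient_of r of (p, q) \<Rightarrow> a powi p * b ^ nat q))"

lemma tr_formula:
  assumes "det (A::cmat) = 1" "det B = 1" "v \<noteq> 0" "A *v v = a *s v" "B *v v = b *s v"
  shows "a \<noteq> 0" "b \<noteq> 0" "mu a b c \<noteq> 0 \<and> tr_curve A B c = mu a b c + 1 / mu a b c"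
proof -
  show a0: "a \<noteq> 0" using eig_trace[OF assms(1,4,3)] by simp
  show b0: "b \<noteq> 0" using eig_trace[OF assms(2,5,3)] by simp
  show "mu a b c \<noteq> 0 \<and> tr_curve A B c = mu a b c + 1 / mu a b c"
  proof (cases c)
    case None
    thus ?thesis using eig_trace[OF assms(1,4,3)] by (simp add: mu_def tr_curve_def)
  next
    case (Some r)
    obtain p q where pq: "quotient_of r = (p, q)" by (cases "quotient_of r")
    have q0: "q > 0" using quotient_of_denom_pos[OF pq] .
    have fl: "\<lfloor>of_int (int (nat q) * p) / (of_int (int (nat q)) :: real)\<rfloor> = p"
      using q0 by simp
    have W: "word_mat A B p (nat q) *v v = (a powi p * b ^ nat q) *s v \<and> det (word_mat A B p (nat q)) = 1"
      using word_eig[OF assms(1,4) a0 assms(2,5), of p "nat q" "nat q"] unfolding word_mat_def fl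
      by simp
    show ?thesis using eig_trace[of "word_mat A B p (nat q)" v "a powi p * b ^ nat q"] W assms(3)
      by (simp add: mu_def tr_curve_def Some pq)
  qed
qed

lemma interval_iff:
  assumes "(m::complex) \<noteq> 0"
  shows "in_real_interval (m + 1/m) \<longleftrightarrow> cmod m = 1"
proof
  assume "cmod m = 1"
  hence "m * cnj m = 1" by (metis complex_norm_square mult.commute of_real_1 power_one)
  hence "1/m = cnj m" using assms by (simp add: field_simps)
  hence e: "m + 1/m = complex_of_real (2 * Re m)" by (simp add: complex_add_cnj)
  have "\<bar>Re m\<bar> \<le> 1" using abs_Re_le_cmod[of m] \<open>cmod m = 1\<close> by simp
  hence "2 * Re m \<in> {-2..2}" by auto
  thus "in_real_interval (m + 1/m)" unfolding in_real_interval_def e by blast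
next
  assume "in_real_interval (m + 1/m)"
  then obtain t where t: "t \<in> {-2..2}" "m + 1/m = complex_of_real t" unfolding in_real_interval_def by blast
  define s where "s = sqrt (4 - t^2)"
  have "(t-2)*(t+2) \<le> 0" using t(1) by (intro mult_nonpos_nonneg) auto
  hence t2: "t^2 \<le> 4" by (simp add: power2_eq_square algebra_simps)
  have s2: "s^2 = 4 - t^2" unfolding s_def using t2 by simp
  have q: "m*m - t*m + 1 = 0" using t(2) assms by (simp add: field_simps)
  have z: "(complex_of_real t)^2 - 4 + (complex_of_real s)^2 = 0"
  proof -
    have "t^2 - 4 + s^2 = 0" using s2 by simp
    hence "complex_of_real (t^2 - 4 + s^2) = 0" by simp
    thus ?thesis by simp
  qed
  have "(2*m - t - \<i> * s) * (2*m - t + \<i> * s) = 4 * (m*m - t*m + 1) + ((complex_of_real t)^2 - 4 + (complex_of_real s)^2)"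
    by (simp add: algebra_simps power2_eq_square)
  also have "\<dots> = 0" using q z by simp
  finally have "2*m - t - \<i> * s = 0 \<or> 2*m - t + \<i> * s = 0" by simp
  hence "m = Complex (t/2) (s/2) \<or> m = Complex (t/2) (-s/2)"
    by (auto simp: complex_eq_iff)
  hence "(cmod m)^2 = (t/2)^2 + (s/2)^2" by (auto simp: cmod_def)
  also have "\<dots> = 1" using s2 by (simp add: power_divide add_divide_distrib[symmetric])
  finally show "cmod m = 1" using norm_ge_zero[of m] by (auto simp add: power2_eq_1_iff)
qed

lemma exp_diff_ge: "\<bar>u::real\<bar> \<le> \<bar>exp u - exp (-u)\<bar>"
proof (cases "u \<ge> 0")
  case True
  have "1 + u \<le> exp u" by (rule exp_ge_add_one_self)
  moreover have "exp (-u) \<le> 1" using True by simp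
  ultimately have "u \<le> exp u - exp (-u)" by linarith
  thus ?thesis using True by simp
next
  case False
  have "1 - u \<le> exp (-u)" using exp_ge_add_one_self[of "-u"] by simp
  moreover have "exp u \<le> 1" using False by simp
  ultimately have "-u \<le> exp (-u) - exp u" by linarith
  thus ?thesis using False by simp
qed

lemma trace_bounds:
  assumes "(m::complex) \<noteq> 0"
  shows "\<bar>ln (cmod m)\<bar> \<le> cmod (m + 1/m)" "cmod (m + 1/m) \<le> 2 * exp \<bar>ln (cmod m)\<bar>"
proof -
  define u where "u = ln (cmod m)"
  have r: "cmod m = exp u" using assms unfolding u_def by simp
  have ri: "cmod (1/m) = exp (-u)" using r by (simp add: norm_divide exp_minus inverse_eq_divide)
  have "\<bar>cmod m - cmod (1/m)\<bar> \<le> cmod (m + 1/m)"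
    using norm_diff_ineq[of m "1/m"] norm_diff_ineq[of "1/m" m] by (simp add: add.commute)
  thus "\<bar>ln (cmod m)\<bar> \<le> cmod (m + 1/m)" using exp_diff_ge[of u] r ri unfolding u_def[symmetric] by linarith
  have "cmod (m + 1/m) \<le> exp u + exp (-u)" using norm_triangle_ineq[of m "1/m"] r ri by simp
  also have "\<dots> \<le> 2 * exp \<bar>u\<bar>" by (cases "u \<ge> 0") auto
  finally show "cmod (m + 1/m) \<le> 2 * exp \<bar>ln (cmod m)\<bar>" unfolding u_def .
qed

lemma S_formula:
  assumes "a \<noteq> 0" "b \<noteq> 0"
  shows "ln (cmod (mu a b None)) = ln (cmod a)"
        "ln (cmod (mu a b (Some r))) = real_of_int (snd (quotient_of r)) * (real_of_rat r * ln (cmod a) + ln (cmod b))"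
proof -
  show "ln (cmod (mu a b None)) = ln (cmod a)" by (simp add: mu_def)
  obtain p q where pq: "quotient_of r = (p, q)" by (cases "quotient_of r")
  have q0: "q > 0" using quotient_of_denom_pos[OF pq] .
  have r: "real_of_rat r = of_int p / of_int q" using quotient_of_div[OF pq] by (simp add: of_rat_divide)
  have pa: "cmod a > 0" "cmod b > 0" using assms by auto
  have "cmod (mu a b (Some r)) = cmod a powi p * cmod b ^ nat q"
    by (simp add: mu_def pq norm_mult norm_power_int norm_power)
  hence "ln (cmod (mu a b (Some r))) = ln (cmod a powi p) + ln (cmod b ^ nat q)"
    using pa by (simp add: ln_mult)
  also have "ln (cmod a powi p) = of_int p * ln (cmod a)"
  proof -
    have "cmod a powi p = cmod a powr of_int p" using powr_real_of_int'[of "cmod a" p] pa by simp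
    thus ?thesis using pa by (simp add: ln_powr)
  qed
  also have "ln (cmod b ^ nat q) = of_int q * ln (cmod b)"
    using pa q0 by (simp add: ln_realpow)
  finally show "ln (cmod (mu a b (Some r))) = real_of_int (snd (quotient_of r)) * (real_of_rat r * ln (cmod a) + ln (cmod b))"
    using q0 by (simp add: pq r field_simps)
qed

lemma denom_le:
  assumes "k > 0" "r = of_int h / of_int k"
  shows "snd (quotient_of r) \<le> k"
proof -
  obtain p q where pq: "quotient_of r = (p, q)" by (cases "quotient_of r")
  have q0: "q > 0" using quotient_of_denom_pos[OF pq] .
  have cp: "coprime p q" using quotient_of_coprime[OF pq] .
  have "(of_int p / of_int q :: rat) = of_int h / of_int k" using quotient_of_div[OF pq] assms(2) by simp
  hence "(of_int (p * k) :: rat) = of_int (h * q)" using q0 assms(1) by (simp add: frac_eq_eq)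
  hence e: "p * k = h * q" by (simp only: of_int_eq_iff)
  hence "q dvd p * k" by simp
  hence "q dvd k" using cp by (simp add: coprime_commute coprime_dvd_mult_right_iff)
  thus ?thesis using pq assms(1) by (simp add: zdvd_imp_le)
qed

lemma finite_contra:
  assumes "inj (Xs :: nat \<Rightarrow> rat option)"
    and "\<forall>n\<ge>N. \<exists>r. Xs n = Some r \<and> \<bar>real_of_rat r\<bar> \<le> M \<and> real_of_int (snd (quotient_of r)) \<le> Q"
  shows False
proof -
  define K where "K = \<lceil>\<bar>M\<bar> * \<bar>Q\<bar>\<rceil>"
  define Qi where "Qi = \<lceil>\<bar>Q\<bar>\<rceil>"
  define S where "S = (\<lambda>(p,q). Some (of_int p / of_int q :: rat)) ` ({-K..K} \<times> {1..Qi})"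
  have fS: "finite S" unfolding S_def by simp
  have "Xs ` {N..} \<subseteq> S"
  proof
    fix y assume "y \<in> Xs ` {N..}"
    then obtain n where n: "n \<ge> N" "y = Xs n" by auto
    then obtain r where r: "Xs n = Some r" "\<bar>real_of_rat r\<bar> \<le> M" "real_of_int (snd (quotient_of r)) \<le> Q"
      using assms(2) by blast
    obtain p q where pq: "quotient_of r = (p, q)" by (cases "quotient_of r")
    have q0: "q > 0" using quotient_of_denom_pos[OF pq] .
    have rr: "r = of_int p / of_int q" using quotient_of_div[OF pq] .
    hence "real_of_rat r = of_int p / of_int q" by (simp add: of_rat_divide)
    hence "real_of_int p = real_of_rat r * of_int q" using q0 by (simp add: field_simps)
    hence "\<bar>real_of_int p\<bar> = \<bar>real_of_rat r\<bar> * of_int q" using q0 by (simp add: abs_mult)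
    also have "\<dots> \<le> \<bar>M\<bar> * \<bar>Q\<bar>"
      using r(2,3) pq q0 by (intro mult_mono) auto
    finally have "\<bar>p\<bar> \<le> K" unfolding K_def by linarith
    moreover have "q \<le> Qi" using r(3) pq unfolding Qi_def by simp linarith
    ultimately have "(p, q) \<in> {-K..K} \<times> {1..Qi}" using q0 by auto
    thus "y \<in> S" unfolding S_def using n r(1) rr by force
  qed
  hence "finite (Xs ` {N..})" using fS finite_subset by blast
  moreover have "inj_on Xs {N..}" by (rule inj_on_subset[OF assms(1) subset_UNIV])
  ultimately have "finite {N..}" using finite_imageD by blast
  thus False using infinite_Ici[of N] by blast
qed

fun nsq :: "(nat \<Rightarrow> rat) \<Rightarrow> real \<Rightarrow> nat \<Rightarrow> nat" where
  "nsq ap x 0 = 1"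
| "nsq ap x (Suc n) = nat \<lceil>1 / \<bar>real_of_rat (ap (nsq ap x n)) - x\<bar>\<rceil> + 1"

lemma small_eventually:
  assumes "e > (0::real)" shows "\<exists>N. \<forall>n\<ge>N. 1 / real (Suc n) < e"
proof -
  obtain N where N: "N > 0" "inverse (real N) < e" using ex_inverse_of_nat_less[OF assms] by blast
  have "1 / real (Suc n) < e" if "n \<ge> N" for n
  proof -
    have "1 / real (Suc n) \<le> 1 / real N" using N(1) that by (intro divide_left_mono) auto
    thus ?thesis using N(2) by (simp add: inverse_eq_divide)
  qed
  thus ?thesis by blast
qed

lemma approx_seq:
  fixes x :: real
  shows "\<exists>C Xs. inj Xs \<and> hat_tendsto (\<lambda>n. curve_pt (Xs n)) (Some x) \<and>
           (\<forall>n. \<exists>r. Xs n = Some r \<and> real_of_int (snd (quotient_of r)) * \<bar>real_of_rat r - x\<bar> \<le> C)"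
proof (cases "x \<in> \<rat>")
  case True
  then obtain x0 where x0: "x = real_of_rat x0" by (cases rule: Rats_cases) auto
  obtain p0 d0 where pd: "quotient_of x0 = (p0, d0)" by (cases "quotient_of x0")
  have d0: "d0 > 0" using quotient_of_denom_pos[OF pd] .
  have x0q: "x0 = of_int p0 / of_int d0" using quotient_of_div[OF pd] .
  define Xs where "Xs n = Some (x0 + 1 / of_nat (Suc n))" for n
  have inj: "inj Xs" unfolding Xs_def inj_def by simp
  have dist: "real_of_rat (x0 + 1 / of_nat (Suc n)) - x = 1 / real (Suc n)" for n
    using x0 by (simp add: of_rat_add of_rat_divide)
  have bnd: "real_of_int (snd (quotient_of (x0 + 1 / of_nat (Suc n)))) * \<bar>real_of_rat (x0 + 1 / of_nat (Suc n)) - x\<bar> \<le> of_int d0" for n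
  proof -
    have "x0 + 1 / of_nat (Suc n) = of_int (p0 * int (Suc n) + d0) / of_int (d0 * int (Suc n))"
      using d0 by (simp add: x0q field_simps)
    hence "snd (quotient_of (x0 + 1 / of_nat (Suc n))) \<le> d0 * int (Suc n)"
      using denom_le[of "d0 * int (Suc n)" "x0 + 1 / of_nat (Suc n)" "p0 * int (Suc n) + d0"] d0 by simp
    hence "real_of_int (snd (quotient_of (x0 + 1 / of_nat (Suc n)))) \<le> of_int d0 * real (Suc n)"
      by (metis of_int_le_iff of_int_mult of_int_of_nat_eq)
    hence "real_of_int (snd (quotient_of (x0 + 1 / of_nat (Suc n)))) * (1 / real (Suc n)) \<le> of_int d0 * real (Suc n) * (1 / real (Suc n))"
      by (intro mult_right_mono) auto
    thus ?thesis unfolding dist by simp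
  qed
  have tend: "hat_tendsto (\<lambda>n. curve_pt (Xs n)) (Some x)"
    unfolding hat_tendsto_def
  proof (simp, intro allI impI)
    fix e :: real assume "e > 0"
    then obtain N where N: "\<forall>n\<ge>N. 1 / real (Suc n) < e" using small_eventually by blast
    show "\<exists>N. \<forall>n\<ge>N. \<exists>y. curve_pt (Xs n) = Some y \<and> \<bar>y - x\<bar> < e"
    proof -
      have dist2: "\<bar>real_of_rat (x0 + 1 / (1 + rat_of_nat n)) - x\<bar> = 1 / (1 + real n)" for n
        using dist[of n] by simp
      show ?thesis using N by (auto simp: Xs_def curve_pt_def dist2)
    qed
  qed
  show ?thesis using inj tend bnd unfolding Xs_def by blast
next
  case False
  have ex: "\<exists>r. real_of_int (snd (quotient_of r)) * \<bar>real_of_rat r - x\<bar> \<le> 1 \<and> \<bar>real_of_rat r - x\<bar> < 1 / real N"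
    if N: "N > 0" for N :: nat
  proof -
    obtain h k where hk: "0 < k" "k \<le> int N" "\<bar>of_int k * x - of_int h\<bar> < 1 / real N"
      using Dirichlet_approx[OF N] by blast
    define r where "r = (of_int h / of_int k :: rat)"
    have q: "snd (quotient_of r) \<le> k" using denom_le[OF hk(1) r_def] .
    have rr: "real_of_rat r = of_int h / of_int k" unfolding r_def by (simp add: of_rat_divide)
    have e1: "real_of_int k * \<bar>real_of_rat r - x\<bar> = \<bar>of_int k * x - of_int h\<bar>"
      using hk(1) by (simp add: rr abs_mult[symmetric] field_simps abs_minus_commute)
    have "real_of_int (snd (quotient_of r)) * \<bar>real_of_rat r - x\<bar> \<le> real_of_int k * \<bar>real_of_rat r - x\<bar>"
      using q by (intro mult_right_mono) auto
    also have "\<dots> < 1 / real N" using e1 hk(3) by simp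
    also have "\<dots> \<le> 1" using N by simp
    finally have A: "real_of_int (snd (quotient_of r)) * \<bar>real_of_rat r - x\<bar> \<le> 1" by simp
    have "\<bar>real_of_rat r - x\<bar> \<le> real_of_int k * \<bar>real_of_rat r - x\<bar>"
      using hk(1) by (simp add: mult_le_cancel_right1)
    hence "\<bar>real_of_rat r - x\<bar> < 1 / real N" using e1 hk(3) by simp
    thus ?thesis using A by blast
  qed
  define ap where "ap N = (SOME r. real_of_int (snd (quotient_of r)) * \<bar>real_of_rat r - x\<bar> \<le> 1 \<and> \<bar>real_of_rat r - x\<bar> < 1 / real N)" for N
  have ap: "real_of_int (snd (quotient_of (ap N))) * \<bar>real_of_rat (ap N) - x\<bar> \<le> 1 \<and> \<bar>real_of_rat (ap N) - x\<bar> < 1 / real N"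
    if "N > 0" for N
    unfolding ap_def by (rule someI_ex[OF ex[OF that]])
  define Ns where "Ns = nsq ap x"
  define d where "d n = \<bar>real_of_rat (ap (Ns n)) - x\<bar>" for n
  have Nspos: "Ns n > 0" for n by (cases n) (auto simp: Ns_def)
  have dpos: "d n > 0" for n
  proof -
    have "real_of_rat (ap (Ns n)) \<noteq> x" using False by (metis Rats_of_rat)
    thus ?thesis unfolding d_def by simp
  qed
  have dlt: "d n < 1 / real (Ns n)" for n using ap[OF Nspos[of n]] unfolding d_def by simp
  have NsS: "real (Ns (Suc n)) > 1 / d n" for n
  proof -
    have "Ns (Suc n) = nat \<lceil>1 / d n\<rceil> + 1" by (simp add: Ns_def d_def)
    moreover have "1 / d n \<le> real (nat \<lceil>1 / d n\<rceil>)" by linarith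
    ultimately show ?thesis by simp
  qed
  have ddec: "d (Suc n) < d n" for n
  proof -
    have "1 < real (Ns (Suc n)) * d n" using NsS[of n] dpos[of n] by (simp add: divide_less_eq)
    hence "1 / real (Ns (Suc n)) < d n" using Nspos[of "Suc n"] by (simp add: divide_less_eq mult.commute)
    thus ?thesis using dlt[of "Suc n"] by linarith
  qed
  have Nsge: "real (Ns n) \<ge> real (Suc n)" for n
  proof (induction n)
    case 0 then show ?case by (simp add: Ns_def)
  next
    case (Suc n)
    have "1 / d n > real (Ns n)"
      using dlt[of n] dpos[of n] Nspos[of n] by (simp add: field_simps)
    hence "real (Ns (Suc n)) > real (Suc n)" using NsS[of n] Suc.IH by linarith
    hence "Suc n < Ns (Suc n)" by (simp only: of_nat_less_iff)
    thus ?case by simp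
  qed
  define Xs where "Xs n = Some (ap (Ns n))" for n
  have inj: "inj Xs"
  proof (rule injI)
    fix m n assume "Xs m = Xs n"
    hence "d m = d n" unfolding Xs_def d_def by simp
    moreover have "m < n \<Longrightarrow> - d m < - d n" by (rule lift_Suc_mono_less[of "\<lambda>n. - d n"]) (use ddec in auto)
    moreover have "n < m \<Longrightarrow> - d n < - d m" by (rule lift_Suc_mono_less[of "\<lambda>n. - d n"]) (use ddec in auto)
    ultimately show "m = n" by (metis less_irrefl linorder_neqE_nat)
  qed
  have dsmall: "d n < 1 / real (Suc n)" for n
  proof -
    have "1 / real (Ns n) \<le> 1 / real (Suc n)" using Nsge[of n] by (intro divide_left_mono) auto
    thus ?thesis using dlt[of n] by simp
  qed
  have tend: "hat_tendsto (\<lambda>n. curve_pt (Xs n)) (Some x)"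
    unfolding hat_tendsto_def
  proof (simp, intro allI impI)
    fix e :: real assume "e > 0"
    then obtain N where N: "\<forall>n\<ge>N. 1 / real (Suc n) < e" using small_eventually by blast
    have "\<forall>n\<ge>N. \<exists>y. curve_pt (Xs n) = Some y \<and> \<bar>y - x\<bar> < e"
    proof (intro allI impI)
      fix n assume "n \<ge> N"
      hence "d n < e" using dsmall[of n] N by force
      thus "\<exists>y. curve_pt (Xs n) = Some y \<and> \<bar>y - x\<bar> < e" by (simp add: Xs_def curve_pt_def d_def)
    qed
    thus "\<exists>N. \<forall>n\<ge>N. \<exists>y. curve_pt (Xs n) = Some y \<and> \<bar>y - x\<bar> < e" by blast
  qed
  have bnd: "\<forall>n. \<exists>r. Xs n = Some r \<and> real_of_int (snd (quotient_of r)) * \<bar>real_of_rat r - x\<bar> \<le> 1"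
    using ap Nspos unfolding Xs_def by blast
  show ?thesis using inj tend bnd by blast
qed

definition end_inv :: "(rat option \<Rightarrow> complex) \<Rightarrow> real option set" where
  "end_inv T = {\<Lambda>. \<exists>K>0. \<exists>Xs :: nat \<Rightarrow> rat option.
      inj Xs \<and> hat_tendsto (\<lambda>n. curve_pt (Xs n)) \<Lambda> \<and> (\<forall>n. cmod (T (Xs n)) < K)}"

lemma curve_pt_inj: "curve_pt c = curve_pt c' \<Longrightarrow> c = c'"
  by (cases c; cases c') (auto simp: curve_pt_def)

lemma denom_nat: "snd (quotient_of (of_nat n :: rat)) = 1"
proof -
  have "snd (quotient_of (of_nat n :: rat)) \<le> 1"
    by (rule denom_le[of 1 _ "int n"]) auto
  moreover have "snd (quotient_of (of_nat n :: rat)) > 0" by (rule quotient_of_denom_pos')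
  ultimately show ?thesis by simp
qed

lemma nat_seq:
  "inj (\<lambda>n. Some (of_nat n :: rat)) \<and> hat_tendsto (\<lambda>n. curve_pt (Some (of_nat n :: rat))) None"
proof
  show "inj (\<lambda>n. Some (of_nat n :: rat))" by (simp add: inj_def)
  have "\<exists>N. \<forall>n\<ge>N. curve_pt (Some (of_nat n :: rat)) = None \<or> (\<exists>x. curve_pt (Some (of_nat n :: rat)) = Some x \<and> \<bar>x\<bar> > M)" for M :: real
  proof (intro exI allI impI)
    fix n :: nat assume "n \<ge> nat \<lceil>M\<rceil> + 1"
    hence "M < real n" by linarith
    thus "curve_pt (Some (of_nat n :: rat)) = None \<or> (\<exists>x. curve_pt (Some (of_nat n :: rat)) = Some x \<and> \<bar>x\<bar> > M)"
      by (simp add: curve_pt_def)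
  qed
  thus "hat_tendsto (\<lambda>n. curve_pt (Some (of_nat n :: rat))) None"
    unfolding hat_tendsto_def by simp
qed

lemma main_abstract:
  fixes T :: "rat option \<Rightarrow> complex" and S :: "rat option \<Rightarrow> real" and \<alpha> \<beta> :: real
  assumes lo: "\<And>c. \<bar>S c\<bar> \<le> cmod (T c)" and hi: "\<And>c. cmod (T c) \<le> 2 * exp \<bar>S c\<bar>"
    and iv: "\<And>c. in_real_interval (T c) \<longleftrightarrow> S c = 0"
    and SN: "S None = \<alpha>"
    and SS: "\<And>r. S (Some r) = real_of_int (snd (quotient_of r)) * (real_of_rat r * \<alpha> + \<beta>)"
  shows "(\<exists>X0. end_inv T = {X0}
            \<and> (\<forall>c. curve_pt c = X0 \<longrightarrow>
                   in_real_interval (T c) \<and>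
                   (\<forall>c'. c' \<noteq> c \<longrightarrow> \<not> in_real_interval (T c')))
            \<and> (X0 \<notin> range curve_pt \<longrightarrow> (\<forall>c. \<not> in_real_interval (T c))))
       \<or> (end_inv T = UNIV \<and> (\<forall>c. in_real_interval (T c)))"
proof (cases "\<alpha> = 0 \<and> \<beta> = 0")
  case True
  have S0: "S c = 0" for c using True by (cases c) (auto simp: SN SS)
  have Tb: "cmod (T c) < 3" for c using hi[of c] S0[of c] by simp
  have "\<Lambda> \<in> end_inv T" for \<Lambda>
  proof (cases \<Lambda>)
    case None
    thus ?thesis unfolding end_inv_def using nat_seq Tb
      by (intro CollectI exI[of _ 3]) auto
  next
    case (Some x)
    obtain C Xs where Xs: "inj Xs" "hat_tendsto (\<lambda>n. curve_pt (Xs n)) (Some x)"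
      using approx_seq[of x] by blast
    show ?thesis unfolding end_inv_def Some using Xs Tb
      by (intro CollectI exI[of _ 3]) auto
  qed
  hence "end_inv T = UNIV" by blast
  moreover have "\<forall>c. in_real_interval (T c)" using iv S0 by blast
  ultimately show ?thesis by blast
next
  case False
  define X0 where "X0 = (if \<alpha> = 0 then None else Some (- \<beta> / \<alpha>))"
  have key: "S c = 0 \<longleftrightarrow> curve_pt c = X0" for c
  proof (cases c)
    case None
    thus ?thesis using False by (simp add: SN X0_def curve_pt_def)
  next
    case (Some r)
    have q0: "real_of_int (snd (quotient_of r)) > 0" using quotient_of_denom_pos'[of r] by simp
    show ?thesis
    proof (cases "\<alpha> = 0")
      case True
      thus ?thesis using False q0 by (simp add: Some SS X0_def curve_pt_def)
    next
      case False
      have "S c = 0 \<longleftrightarrow> real_of_rat r * \<alpha> + \<beta> = 0" using q0 by (simp add: Some SS)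
      also have "\<dots> \<longleftrightarrow> real_of_rat r = - \<beta> / \<alpha>" using False by (auto simp: field_simps)
      finally show ?thesis using False by (simp add: Some X0_def curve_pt_def)
    qed
  qed
  have sub: "\<Lambda> = X0" if L: "\<Lambda> \<in> end_inv T" for \<Lambda>
  proof -
    obtain K Xs where K: "K > 0" "inj Xs" "hat_tendsto (\<lambda>n. curve_pt (Xs n)) \<Lambda>"
      "\<forall>n. cmod (T (Xs n)) < K"
      using L unfolding end_inv_def by blast
    have SK: "\<bar>S (Xs n)\<bar> < K" for n
    proof -
      have "cmod (T (Xs n)) < K" using K(4) by blast
      thus ?thesis using lo[of "Xs n"] by linarith
    qed
    have SKr: "real_of_int (snd (quotient_of r)) * \<bar>real_of_rat r * \<alpha> + \<beta>\<bar> < K" if "Xs n = Some r" for n r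
      using SK[of n] that quotient_of_denom_pos'[of r] by (simp add: SS abs_mult)
    have q1: "real_of_int (snd (quotient_of r)) \<ge> 1" for r
      using quotient_of_denom_pos'[of r] by linarith
    show ?thesis
    proof (cases "\<alpha> = 0")
      case True
      hence b: "\<beta> \<noteq> 0" using False by simp
      show ?thesis
      proof (cases \<Lambda>)
        case None thus ?thesis using True by (simp add: X0_def)
      next
        case (Some l)
        obtain N where N: "\<forall>n\<ge>N. \<exists>x. curve_pt (Xs n) = Some x \<and> \<bar>x - l\<bar> < 1"
          using K(3) unfolding Some hat_tendsto_def by force
        have "\<forall>n\<ge>N. \<exists>r. Xs n = Some r \<and> \<bar>real_of_rat r\<bar> \<le> \<bar>l\<bar> + 1 \<and> real_of_int (snd (quotient_of r)) \<le> K / \<bar>\<beta>\<bar>"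
        proof (intro allI impI)
          fix n assume "n \<ge> N"
          then obtain x where x: "curve_pt (Xs n) = Some x" "\<bar>x - l\<bar> < 1" using N by blast
          then obtain r where r: "Xs n = Some r" "x = real_of_rat r" by (cases "Xs n") (auto simp: curve_pt_def)
          have "real_of_int (snd (quotient_of r)) * \<bar>\<beta>\<bar> < K" using SKr[OF r(1)] True by simp
          hence "real_of_int (snd (quotient_of r)) \<le> K / \<bar>\<beta>\<bar>" using b by (simp add: field_simps)
          moreover have "\<bar>real_of_rat r\<bar> \<le> \<bar>l\<bar> + 1" using x(2) r(2) by linarith
          ultimately show "\<exists>r. Xs n = Some r \<and> \<bar>real_of_rat r\<bar> \<le> \<bar>l\<bar> + 1 \<and> real_of_int (snd (quotient_of r)) \<le> K / \<bar>\<beta>\<bar>"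
            using r(1) by blast
        qed
        thus ?thesis using finite_contra[OF K(2)] by blast
      qed
    next
      case False
      define x0 where "x0 = - \<beta> / \<alpha>"
      have X0: "X0 = Some x0" using False by (simp add: X0_def x0_def)
      have lin: "\<bar>real_of_rat r * \<alpha> + \<beta>\<bar> = \<bar>\<alpha>\<bar> * \<bar>real_of_rat r - x0\<bar>" for r
        using False by (simp add: x0_def abs_mult[symmetric] field_simps)
      have aa: "\<bar>\<alpha>\<bar> > 0" using False by simp
      have close: "\<bar>real_of_rat r - x0\<bar> * real_of_int (snd (quotient_of r)) < K / \<bar>\<alpha>\<bar>" if "Xs n = Some r" for n r
      proof -
        have "real_of_int (snd (quotient_of r)) * (\<bar>\<alpha>\<bar> * \<bar>real_of_rat r - x0\<bar>) < K"
          using SKr[OF that] lin[of r] by simp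
        hence "(\<bar>real_of_rat r - x0\<bar> * real_of_int (snd (quotient_of r))) * \<bar>\<alpha>\<bar> < K"
          by (simp add: ac_simps)
        thus ?thesis using aa by (simp add: pos_less_divide_eq)
      qed
      show ?thesis
      proof (cases \<Lambda>)
        case None
        obtain N where N: "\<forall>n\<ge>N. curve_pt (Xs n) = None \<or> (\<exists>x. curve_pt (Xs n) = Some x \<and> \<bar>x\<bar> > \<bar>x0\<bar> + K / \<bar>\<alpha>\<bar>)"
          using K(3) unfolding None hat_tendsto_def by force
        have "Xs n = None" if "n \<ge> N" for n
        proof (cases "Xs n")
          case None thus ?thesis .
        next
          case (Some r)
          have "\<bar>real_of_rat r - x0\<bar> \<le> \<bar>real_of_rat r - x0\<bar> * real_of_int (snd (quotient_of r))"
            using q1[of r] by (simp add: mult_le_cancel_left1)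
          hence "\<bar>real_of_rat r\<bar> < \<bar>x0\<bar> + K / \<bar>\<alpha>\<bar>" using close[OF Some] by linarith
          moreover have "\<bar>real_of_rat r\<bar> > \<bar>x0\<bar> + K / \<bar>\<alpha>\<bar>" using N that Some by (auto simp: curve_pt_def)
          ultimately show ?thesis by linarith
        qed
        hence "Xs N = Xs (Suc N)" by simp
        hence "N = Suc N" using K(2) by (simp add: inj_eq)
        thus ?thesis by simp
      next
        case (Some l)
        show ?thesis
        proof (rule ccontr)
          assume "\<Lambda> \<noteq> X0"
          hence ne: "l \<noteq> x0" using Some X0 by simp
          define d where "d = \<bar>l - x0\<bar>"
          have d0: "d > 0" using ne by (simp add: d_def)
          have TT: "\<forall>e>0. \<exists>N. \<forall>n\<ge>N. \<exists>x. curve_pt (Xs n) = Some x \<and> \<bar>x - l\<bar> < e"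
            using K(3) unfolding Some hat_tendsto_def by simp
          have "d / 2 > 0" using d0 by simp
          then obtain N where N: "\<forall>n\<ge>N. \<exists>x. curve_pt (Xs n) = Some x \<and> \<bar>x - l\<bar> < d / 2"
            using TT by blast
          have "\<forall>n\<ge>N. \<exists>r. Xs n = Some r \<and> \<bar>real_of_rat r\<bar> \<le> \<bar>l\<bar> + d / 2 \<and> real_of_int (snd (quotient_of r)) \<le> (K / \<bar>\<alpha>\<bar>) / (d / 2)"
          proof (intro allI impI)
            fix n assume "n \<ge> N"
            then obtain x where x: "curve_pt (Xs n) = Some x" "\<bar>x - l\<bar> < d / 2" using N by blast
            then obtain r where r: "Xs n = Some r" "x = real_of_rat r" by (cases "Xs n") (auto simp: curve_pt_def)
            have h: "\<bar>real_of_rat r - l\<bar> < d / 2" using x(2) r(2) by simp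
            have far: "\<bar>real_of_rat r - x0\<bar> > d / 2" using h unfolding d_def
              by (cases "real_of_rat r \<ge> l"; cases "l \<ge> x0"; cases "real_of_rat r \<ge> x0") auto
            have "d / 2 * real_of_int (snd (quotient_of r)) \<le> \<bar>real_of_rat r - x0\<bar> * real_of_int (snd (quotient_of r))"
              using far q1[of r] by (intro mult_right_mono) auto
            hence "d / 2 * real_of_int (snd (quotient_of r)) < K / \<bar>\<alpha>\<bar>" using close[OF r(1)] by linarith
            hence "real_of_int (snd (quotient_of r)) * (d / 2) < K / \<bar>\<alpha>\<bar>" by (simp only: mult.commute)
            hence "real_of_int (snd (quotient_of r)) < (K / \<bar>\<alpha>\<bar>) / (d / 2)"
              using pos_less_divide_eq[of "d / 2" "real_of_int (snd (quotient_of r))" "K / \<bar>\<alpha>\<bar>"] d0 by simp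
            hence "real_of_int (snd (quotient_of r)) \<le> (K / \<bar>\<alpha>\<bar>) / (d / 2)" by simp
            moreover have "\<bar>real_of_rat r\<bar> \<le> \<bar>l\<bar> + d / 2" using x(2) r(2) by linarith
            ultimately show "\<exists>r. Xs n = Some r \<and> \<bar>real_of_rat r\<bar> \<le> \<bar>l\<bar> + d / 2 \<and> real_of_int (snd (quotient_of r)) \<le> (K / \<bar>\<alpha>\<bar>) / (d / 2)"
              using r(1) by blast
          qed
          thus False using finite_contra[OF K(2)] by blast
        qed
      qed
    qed
  qed
  have mem: "X0 \<in> end_inv T"
  proof (cases "\<alpha> = 0")
    case True
    have "S (Some (of_nat n)) = \<beta>" for n using True by (simp add: SS denom_nat)
    hence "cmod (T (Some (of_nat n))) < 2 * exp \<bar>\<beta>\<bar> + 1" for n using hi[of "Some (of_nat n)"] by simp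
    moreover have "2 * exp \<bar>\<beta>\<bar> + 1 > 0" by (simp add: add_pos_pos)
    ultimately show ?thesis unfolding end_inv_def X0_def using True nat_seq
      by (intro CollectI exI[of _ "2 * exp \<bar>\<beta>\<bar> + 1"]) auto
  next
    case False
    define x0 where "x0 = - \<beta> / \<alpha>"
    have X0: "X0 = Some x0" using False by (simp add: X0_def x0_def)
    have lin: "\<bar>real_of_rat r * \<alpha> + \<beta>\<bar> = \<bar>\<alpha>\<bar> * \<bar>real_of_rat r - x0\<bar>" for r
      using False by (simp add: x0_def abs_mult[symmetric] field_simps)
    obtain C Xs where Xs: "inj Xs" "hat_tendsto (\<lambda>n. curve_pt (Xs n)) (Some x0)"
      "\<forall>n. \<exists>r. Xs n = Some r \<and> real_of_int (snd (quotient_of r)) * \<bar>real_of_rat r - x0\<bar> \<le> C"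
      using approx_seq[of x0] by blast
    have "cmod (T (Xs n)) < 2 * exp (\<bar>\<alpha>\<bar> * C) + 1" for n
    proof -
      obtain r where r: "Xs n = Some r" "real_of_int (snd (quotient_of r)) * \<bar>real_of_rat r - x0\<bar> \<le> C"
        using Xs(3) by blast
      have "\<bar>S (Xs n)\<bar> = \<bar>\<alpha>\<bar> * (real_of_int (snd (quotient_of r)) * \<bar>real_of_rat r - x0\<bar>)"
        using quotient_of_denom_pos'[of r] by (simp add: r(1) SS abs_mult lin)
      also have "\<dots> \<le> \<bar>\<alpha>\<bar> * C" using r(2) by (intro mult_left_mono) auto
      finally have "exp \<bar>S (Xs n)\<bar> \<le> exp (\<bar>\<alpha>\<bar> * C)" by simp
      thus ?thesis using hi[of "Xs n"] by linarith
    qed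
    moreover have "2 * exp (\<bar>\<alpha>\<bar> * C) + 1 > 0" by (simp add: add_pos_pos)
    ultimately show ?thesis unfolding end_inv_def X0 using Xs(1,2)
      by (intro CollectI exI[of _ "2 * exp (\<bar>\<alpha>\<bar> * C) + 1"]) auto
  qed
  have "end_inv T = {X0}" using sub mem by blast
  moreover have "\<forall>c. curve_pt c = X0 \<longrightarrow> in_real_interval (T c) \<and> (\<forall>c'. c' \<noteq> c \<longrightarrow> \<not> in_real_interval (T c'))"
    using iv key curve_pt_inj by metis
  moreover have "X0 \<notin> range curve_pt \<longrightarrow> (\<forall>c. \<not> in_real_interval (T c))"
  proof (intro impI allI notI)
    fix c assume "X0 \<notin> range curve_pt" "in_real_interval (T c)"
    hence "curve_pt c = X0" using iv key by simp
    thus False using \<open>X0 \<notin> range curve_pt\<close> by (metis rangeI)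
  qed
  ultimately show ?thesis by blast
qed

theorem theorem1p3:
  fixes A B :: "complex^2^2"
  assumes "det A = 1" and "det B = 1"
    and "trace (A ** B ** matrix_inv A ** matrix_inv B) = 2"
  shows "(\<exists>X0. end_invariants A B = {X0}
            \<and> (\<forall>c. curve_pt c = X0 \<longrightarrow>
                   in_real_interval (tr_curve A B c) \<and>
                   (\<forall>c'. c' \<noteq> c \<longrightarrow> \<not> in_real_interval (tr_curve A B c')))
            \<and> (X0 \<notin> range curve_pt \<longrightarrow> (\<forall>c. \<not> in_real_interval (tr_curve A B c))))
       \<or> (end_invariants A B = UNIV \<and> (\<forall>c. in_real_interval (tr_curve A B c)))"
proof -
  obtain v a b where v: "v \<noteq> 0" "A *v v = a *s v" "B *v v = b *s v"
    using common_eig[OF assms] by blast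
  have a0: "a \<noteq> 0" and b0: "b \<noteq> 0" using tr_formula[OF assms(1,2) v] by auto
  have tr: "mu a b c \<noteq> 0 \<and> tr_curve A B c = mu a b c + 1 / mu a b c" for c
    using tr_formula(3)[OF assms(1,2) v] by blast
  define S where "S c = ln (cmod (mu a b c))" for c
  have E: "end_invariants A B = end_inv (tr_curve A B)"
    by (simp add: end_invariants_def end_inv_def)
  have lo: "\<bar>S c\<bar> \<le> cmod (tr_curve A B c)" for c
    using trace_bounds(1)[of "mu a b c"] tr[of c] unfolding S_def by simp
  have hi: "cmod (tr_curve A B c) \<le> 2 * exp \<bar>S c\<bar>" for c
    using trace_bounds(2)[of "mu a b c"] tr[of c] unfolding S_def by simp
  have iv: "in_real_interval (tr_curve A B c) \<longleftrightarrow> S c = 0" for c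
  proof -
    have "in_real_interval (tr_curve A B c) \<longleftrightarrow> cmod (mu a b c) = 1"
      using interval_iff[of "mu a b c"] tr[of c] by simp
    also have "\<dots> \<longleftrightarrow> S c = 0" unfolding S_def using tr[of c] by simp
    finally show ?thesis .
  qed
  have SN: "S None = ln (cmod a)" unfolding S_def using S_formula(1)[OF a0 b0] .
  have SS: "S (Some r) = real_of_int (snd (quotient_of r)) * (real_of_rat r * ln (cmod a) + ln (cmod b))" for r
    unfolding S_def using S_formula(2)[OF a0 b0] .
  show ?thesis unfolding E by (rule main_abstract[OF lo hi iv SN SS])
qed

end
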